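(* Let $M\ge 2$, $N\ge 1$, $L\ge1$ be integers, $P>0$, $\tau\in(0,1]$, $\alpha\in\mathbb{C}\setminus\{0\}$, $\sigma_R>0$, $c_3\in\mathbb{C}\setminus\{0\}$, and let $\mathbf{s}_u\in\mathbb{C}^{1\times L}$ be a known row vector with $\mathbf{s}_u\mathbf{s}_u^H=L$. For $\theta\in(-\pi/2,\pi/2)$ consider the observation $\mathbf{Y}_r=\alpha c_3\sqrt{N}\sqrt{P\tau}\,\mathbf{b}(\theta)\mathbf{s}_u+\mathbf{Z}_r\in\mathbb{C}^{M\times L}$, where the entries of $\mathbf{Z}_r$ are i.i.d. $\mathcal{CN}(0,\sigma_R^2)$, and the unknown real parameter vector $\xi=[\theta,\mathrm{Re}(c_3),\mathrm{Im}(c_3)]^T$. Let $\mathbf{u}(\xi)=\mathrm{vec}(\alpha c_3\sqrt{N}\sqrt{P\tau}\,\mathbf{b}(\theta)\mathbf{s}_u)$, let $\mathbf{F}\in\mathbb{R}^{3\times3}$ be the Fisher information matrix $\mathbf{F}_{i,j}=\frac{2}{\sigma_R^2}\mathrm{Re}\left\{\frac{\partial\mathbf{u}^H}{\partial\xi_i}\frac{\partial\mathbf{u}}{\partial\xi_j}\right\}$, and let $\mathrm{CRB}(\theta)=[\mathbf{F}^{-1}]_{1,1}$. Then $$\mathrm{CRB}(\theta)=\frac{6\sigma_R^2}{L|c_3|^2P\tau N|\alpha|^2\pi^2\cos^2(\theta)M(M^2-1)}.$$ Consequently, if $\theta\sim\mathcal{U}(-\pi/2,\pi/2)$, then for every $\epsilon>0$,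 with $x_\epsilon=\sqrt{6}\,\sigma_R\left(\epsilon L|c_3|^2P\tau N|\alpha|^2\pi^2M(M^2-1)\right)^{-1/2}$, we have $P(\mathrm{CRB}(\theta)>\epsilon)=\frac{2}{\pi}\sin^{-1}(x_\epsilon)$ if $x_\epsilon<1$, and $P(\mathrm{CRB}(\theta)>\epsilon)=1$ otherwise.
   Context: $\mathbf{b}(\theta)\in\mathbb{C}^M$ is the steering vector with $m$-th entry $e^{-j\pi\sin(\theta)\frac{M-(2m-1)}{2}}$, $m=1,\dots,M$. $\mathrm{vec}$ denotes column-stacking vectorization. *)

theory Defs
  imports "HOL-Analysis.Analysis"
begin

text \<open>Steering vector b(theta) in C^M, entries indexed m = 1..M.\<close>
definition steer :: "nat \<Rightarrow> real \<Rightarrow> nat \<Rightarrow> complex" where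
  "steer M \<theta> m = cis (- (pi * sin \<theta> * (real M - (2 * real m - 1)) / 2))"

text \<open>Column-stacking vectorization of an M x L matrix Y (entries Y m l, 1-based);
  entry k (0-based, k < M*L) of vec Y.\<close>
definition vecM :: "nat \<Rightarrow> (nat \<Rightarrow> nat \<Rightarrow> complex) \<Rightarrow> nat \<Rightarrow> complex" where
  "vecM M Y k = Y (k mod M + 1) (k div M + 1)"

definition u_sig :: "nat \<Rightarrow> nat \<Rightarrow> real \<Rightarrow> real \<Rightarrow> complex \<Rightarrow> (nat \<Rightarrow> complex)
    \<Rightarrow> real^3 \<Rightarrow> nat \<Rightarrow> complex" where
  "u_sig M N P \<tau> \<alpha> s \<xi> =
     vecM M (\<lambda>m l. \<alpha> * Complex (\<xi>$1) (\<xi>$2) * complex_of_real (sqrt (real N) * sqrt (P * \<tau>))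
                      * steer M (\<xi>$0) m * s l)"

definition du :: "nat \<Rightarrow> nat \<Rightarrow> real \<Rightarrow> real \<Rightarrow> complex \<Rightarrow> (nat \<Rightarrow> complex)
    \<Rightarrow> real^3 \<Rightarrow> 3 \<Rightarrow> nat \<Rightarrow> complex" where
  "du M N P \<tau> \<alpha> s \<xi> i k =
     vector_derivative (\<lambda>t. u_sig M N P \<tau> \<alpha> s (\<chi> j. if j = i then t else \<xi>$j) k) (at (\<xi>$i))"

definition fisher :: "nat \<Rightarrow> nat \<Rightarrow> nat \<Rightarrow> real \<Rightarrow> real \<Rightarrow> complex \<Rightarrow> (nat \<Rightarrow> complex)
    \<Rightarrow> real \<Rightarrow> real^3 \<Rightarrow> real^3^3" where
  "fisher M N L P \<tau> \<alpha> s \<sigma> \<xi> = (\<chi> i j. 2 / \<sigma>\<^sup>2 *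
     Re (\<Sum>k<M * L. cnj (du M N P \<tau> \<alpha> s \<xi> i k) * du M N P \<tau> \<alpha> s \<xi> j k))"

definition CRB :: "nat \<Rightarrow> nat \<Rightarrow> nat \<Rightarrow> real \<Rightarrow> real \<Rightarrow> complex \<Rightarrow> (nat \<Rightarrow> complex)
    \<Rightarrow> real \<Rightarrow> complex \<Rightarrow> real \<Rightarrow> real" where
  "CRB M N L P \<tau> \<alpha> s \<sigma> c3 \<theta> =
     matrix_inv (fisher M N L P \<tau> \<alpha> s \<sigma> (\<chi> i. if i = 0 then \<theta> else if i = 1 then Re c3 else Im c3)) $ 0 $ 0"

end

theory Submission
  imports Defs
begin

lemma three_neq: "(0::3) \<noteq> 1" "(0::3) \<noteq> 2" "(1::3) \<noteq> 2" "(1::3) \<noteq> 0" "(2::3) \<noteq> 0" "(2::3) \<noteq> 1"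
  by simp_all

lemma cis_vd:
  fixes d t0 :: real
  shows "((\<lambda>t. cis (-(pi * sin t * d / 2))) has_vector_derivative
     (\<i> * complex_of_real (-(pi * cos t0 * d / 2)) * cis (-(pi * sin t0 * d / 2)))) (at t0)"
  unfolding has_vector_derivative_def
  apply (rule derivative_eq_intros refl)+
  apply (auto simp: scaleR_conv_of_real algebra_simps)
  done

lemma du0:
  fixes \<xi> :: "real^3"
  shows "du M N P \<tau> \<alpha> s \<xi> 0 k = \<alpha> * Complex (\<xi>$1) (\<xi>$2) * complex_of_real (sqrt (real N) * sqrt (P * \<tau>))
     * steer M (\<xi>$0) (k mod M + 1) * s (k div M + 1) *
     (\<i> * complex_of_real (-(pi * cos (\<xi>$0) * (real M - (2 * real (k mod M + 1) - 1)) / 2)))"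
proof -
  let ?d = "real M - (2 * real (k mod M + 1) - 1)"
  have e: "(\<lambda>t. u_sig M N P \<tau> \<alpha> s (\<chi> j. if j = 0 then t else \<xi>$j) k) =
    (\<lambda>t. \<alpha> * Complex (\<xi>$1) (\<xi>$2) * complex_of_real (sqrt (real N) * sqrt (P * \<tau>)) * cis (-(pi * sin t * ?d / 2)) * s (k div M + 1))"
    by (auto simp: u_sig_def vecM_def steer_def)
  show ?thesis unfolding du_def e
    apply (rule vector_derivative_at)
    apply (rule has_vector_derivative_eq_rhs)
    apply (rule has_vector_derivative_mult_left has_vector_derivative_mult_right cis_vd)+
    apply (simp add: steer_def algebra_simps)
    done
qed

lemma du1:
  fixes \<xi> :: "real^3"
  shows "du M N P \<tau> \<alpha> s \<xi> 1 k = \<alpha> * complex_of_real (sqrt (real N) * sqrt (P * \<tau>))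
     * steer M (\<xi>$0) (k mod M + 1) * s (k div M + 1)"
proof -
  have e: "(\<lambda>t. u_sig M N P \<tau> \<alpha> s (\<chi> j. if j = 1 then t else \<xi>$j) k) =
    (\<lambda>t. \<alpha> * (complex_of_real t + \<i> * (\<xi>$2)) * (complex_of_real (sqrt (real N) * sqrt (P * \<tau>))
     * steer M (\<xi>$0) (k mod M + 1) * s (k div M + 1)))"
    by (auto simp: u_sig_def vecM_def Complex_eq algebra_simps)
  show ?thesis unfolding du_def e
    apply (rule vector_derivative_at)
    apply (rule derivative_eq_intros refl)+
    apply simp
    done
qed

lemma du2:
  fixes \<xi> :: "real^3"
  shows "du M N P \<tau> \<alpha> s \<xi> 2 k = \<alpha> * complex_of_real (sqrt (real N) * sqrt (P * \<tau>))
     * steer M (\<xi>$0) (k mod M + 1) * s (k div M + 1) * \<i>"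
proof -
  have e: "(\<lambda>t. u_sig M N P \<tau> \<alpha> s (\<chi> j. if j = 2 then t else \<xi>$j) k) =
    (\<lambda>t. \<alpha> * (complex_of_real (\<xi>$1) + \<i> * complex_of_real t) * (complex_of_real (sqrt (real N) * sqrt (P * \<tau>))
     * steer M (\<xi>$0) (k mod M + 1) * s (k div M + 1)))"
    by (auto simp: u_sig_def vecM_def Complex_eq algebra_simps)
  show ?thesis unfolding du_def e
    apply (rule vector_derivative_at)
    apply (rule derivative_eq_intros refl)+
    apply simp
    done
qed

lemma sum_mod_div:
  fixes f :: "nat \<Rightarrow> nat \<Rightarrow> 'a::comm_monoid_add"
  assumes "0 < M"
  shows "(\<Sum>k<M*L. f (k mod M) (k div M)) = (\<Sum>l<L. \<Sum>m<M. f m l)"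
proof (induction L)
  case 0 then show ?case by simp
next
  case (Suc L)
  have "{..<M * Suc L} = {..<M*L} \<union> {M*L..<M*L+M}" by auto
  then have "(\<Sum>k<M*Suc L. f (k mod M) (k div M)) = (\<Sum>k<M*L. f (k mod M) (k div M)) + (\<Sum>k\<in>{M*L..<M*L+M}. f (k mod M) (k div M))"
    by (simp add: sum.union_disjoint ivl_disj_int)
  also have "(\<Sum>k\<in>{M*L..<M*L+M}. f (k mod M) (k div M)) = (\<Sum>m<M. f m L)"
  proof -
    have "(\<Sum>k\<in>{M*L..<M*L+M}. f (k mod M) (k div M)) = (\<Sum>m\<in>{0..<M}. f ((m + M*L) mod M) ((m + M*L) div M))"
      using sum.shift_bounds_nat_ivl[of "\<lambda>k. f (k mod M) (k div M)" 0 "M*L" M] by (simp add: add.commute)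
    also have "\<dots> = (\<Sum>m\<in>{0..<M}. f m L)"
      using assms by (intro sum.cong) auto
    finally show ?thesis by (simp add: atLeast0LessThan)
  qed
  finally show ?case using Suc by simp
qed

definition EE :: "nat \<Rightarrow> real^3 \<Rightarrow> 3 \<Rightarrow> nat \<Rightarrow> complex" where
  "EE M \<xi> i m = (if i = 0 then Complex (\<xi>$1) (\<xi>$2) * (\<i> * complex_of_real (-(pi * cos (\<xi>$0) / 2)))
      * complex_of_real (real M - 1 - 2 * real m)
     else if i = 1 then 1 else \<i>)"

lemma du_form:
  fixes \<xi> :: "real^3"
  shows "du M N P \<tau> \<alpha> s \<xi> i k = \<alpha> * complex_of_real (sqrt (real N) * sqrt (P * \<tau>))
     * steer M (\<xi>$0) (k mod M + 1) * s (k div M + 1) * EE M \<xi> i (k mod M)"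
proof -
  have t: "(3::3) = 0" by simp
  have "i = 1 \<or> i = 2 \<or> i = 0" using exhaust_3[of i] unfolding t .
  then show ?thesis
    by (elim disjE) (auto simp: du0 du1 du2 EE_def algebra_simps)
qed

lemma steer_norm: "cnj (steer M t m) * steer M t m = 1"
  by (simp add: steer_def cis_cnj cis_mult)

lemma fisher_form:
  fixes \<xi> :: "real^3"
  assumes M: "0 < M" and s: "(\<Sum>l=1..L. s l * cnj (s l)) = of_nat L" and PT: "P * \<tau> \<ge> 0"
  shows "fisher M N L P \<tau> \<alpha> s \<sigma> \<xi> $ i $ j = 2 / \<sigma>\<^sup>2 * ((cmod \<alpha>)\<^sup>2 * (real N * (P * \<tau>)) * real L) *
     Re (\<Sum>m<M. cnj (EE M \<xi> i m) * EE M \<xi> j m)"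
proof -
  let ?C = "complex_of_real ((cmod \<alpha>)\<^sup>2 * (real N * (P * \<tau>)))"
  have K: "complex_of_real (sqrt (real N) * sqrt (P * \<tau>)) * complex_of_real (sqrt (real N) * sqrt (P * \<tau>))
      = complex_of_real (real N * (P * \<tau>))"
    using PT by (simp flip: of_real_mult add: real_sqrt_mult[symmetric])
  have trm: "cnj (du M N P \<tau> \<alpha> s \<xi> i k) * du M N P \<tau> \<alpha> s \<xi> j k =
      ?C * (s (k div M + 1) * cnj (s (k div M + 1))) * (cnj (EE M \<xi> i (k mod M)) * EE M \<xi> j (k mod M))" for k
  proof -
    have "cnj (du M N P \<tau> \<alpha> s \<xi> i k) * du M N P \<tau> \<alpha> s \<xi> j k =
      (\<alpha> * cnj \<alpha>) * (complex_of_real (sqrt (real N) * sqrt (P * \<tau>)) * complex_of_real (sqrt (real N) * sqrt (P * \<tau>)))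
      * (cnj (steer M (\<xi>$0) (k mod M + 1)) * steer M (\<xi>$0) (k mod M + 1))
      * (s (k div M + 1) * cnj (s (k div M + 1))) * (cnj (EE M \<xi> i (k mod M)) * EE M \<xi> j (k mod M))"
      unfolding du_form by (simp add: algebra_simps)
    also have "\<dots> = ?C * (s (k div M + 1) * cnj (s (k div M + 1))) * (cnj (EE M \<xi> i (k mod M)) * EE M \<xi> j (k mod M))"
      unfolding K steer_norm complex_norm_square[symmetric] by simp
    finally show ?thesis .
  qed
  have "(\<Sum>k<M * L. cnj (du M N P \<tau> \<alpha> s \<xi> i k) * du M N P \<tau> \<alpha> s \<xi> j k)
     = (\<Sum>l<L. \<Sum>m<M. ?C * (s (l + 1) * cnj (s (l + 1))) * (cnj (EE M \<xi> i m) * EE M \<xi> j m))"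
    unfolding trm by (rule sum_mod_div[OF M])
  also have "\<dots> = ?C * (\<Sum>l<L. s (l + 1) * cnj (s (l + 1))) * (\<Sum>m<M. cnj (EE M \<xi> i m) * EE M \<xi> j m)"
    by (subst mult.assoc, subst sum_product, simp only: sum_distrib_left mult.assoc)
  also have "(\<Sum>l<L. s (l + 1) * cnj (s (l + 1))) = of_nat L"
    using s sum.atLeast1_atMost_eq[of "\<lambda>l. s l * cnj (s l)" L] by simp
  finally have e: "(\<Sum>k<M * L. cnj (du M N P \<tau> \<alpha> s \<xi> i k) * du M N P \<tau> \<alpha> s \<xi> j k)
     = complex_of_real ((cmod \<alpha>)\<^sup>2 * (real N * (P * \<tau>)) * real L) * (\<Sum>m<M. cnj (EE M \<xi> i m) * EE M \<xi> j m)"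
    by simp
  have r: "Re (complex_of_real r * z) = r * Re z" for r z by simp
  show ?thesis
    unfolding fisher_def vec_lambda_beta e r by (simp only: mult.assoc)
qed

lemma sum_lin: "(\<Sum>m<n. (a - 2 * real m)) = real n * a - real n * (real n - 1)"
proof (induction n)
  case (Suc n) then show ?case by (simp add: algebra_simps)
qed simp

lemma sum_sq: "(\<Sum>m<n. (a - 2 * real m)\<^sup>2) = real n * a\<^sup>2 - 2 * a * real n * (real n - 1)
    + 2 * (real n - 1) * real n * (2 * real n - 1) / 3"
proof (induction n)
  case (Suc n) then show ?case
    by (simp only: sum.lessThan_Suc Suc.IH of_nat_Suc) (simp add: field_simps power2_eq_square)
qed simp

lemma sum_d0: "(\<Sum>m<M. (real M - 1 - 2 * real m)) = 0"
  using sum_lin[of "real M - 1" M] by (simp add: algebra_simps)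

lemma sum_d2: "(\<Sum>m<M. (real M - 1 - 2 * real m)\<^sup>2) = real M * ((real M)\<^sup>2 - 1) / 3"
proof -
  have "(\<Sum>m<M. (real M - 1 - 2 * real m)\<^sup>2) = real M * (real M - 1)\<^sup>2 - 2 * (real M - 1) * real M * (real M - 1)
    + 2 * (real M - 1) * real M * (2 * real M - 1) / 3" by (rule sum_sq)
  also have "\<dots> = real M * ((real M)\<^sup>2 - 1) / 3" by (simp add: field_simps power2_eq_square)
  finally show ?thesis .
qed

lemma sum_d0c: "(\<Sum>m<M. complex_of_real (real M - 1 - 2 * real m)) = 0"
  by (simp only: of_real_sum[symmetric] sum_d0) simp

lemma ee_sums:
  fixes \<xi> :: "real^3" and M :: nat
  defines "S \<equiv> \<lambda>i j. Re (\<Sum>m<M. cnj (EE M \<xi> i m) * EE M \<xi> j m)"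
  shows "S 0 0 = (cmod (Complex (\<xi>$1) (\<xi>$2)))\<^sup>2 * (pi * cos (\<xi>$0) / 2)\<^sup>2 * (real M * ((real M)\<^sup>2 - 1) / 3)"
    and "S 0 1 = 0" and "S 0 2 = 0" and "S 1 0 = 0" and "S 2 0 = 0"
    and "S 1 1 = real M" and "S 2 2 = real M" and "S 1 2 = 0" and "S 2 1 = 0"
proof -
  let ?c = "Complex (\<xi>$1) (\<xi>$2) * (\<i> * complex_of_real (-(pi * cos (\<xi>$0) / 2)))"
  let ?d = "\<lambda>m. complex_of_real (real M - 1 - 2 * real m)"
  have E0: "EE M \<xi> 0 m = ?c * ?d m" for m by (simp add: EE_def)
  have E1: "EE M \<xi> 1 m = 1" for m by (simp add: EE_def)
  have E2: "EE M \<xi> 2 m = \<i>" for m by (simp add: EE_def)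
  have "(\<Sum>m<M. cnj (EE M \<xi> 0 m) * EE M \<xi> 0 m) = (cnj ?c * ?c) * complex_of_real (\<Sum>m<M. (real M - 1 - 2 * real m)\<^sup>2)"
  proof -
    have pw: "cnj (?c * ?d m) * (?c * ?d m) = (cnj ?c * ?c) * complex_of_real ((real M - 1 - 2 * real m)\<^sup>2)" for m
      by (simp only: complex_cnj_mult complex_cnj_complex_of_real of_real_power power2_eq_square of_real_mult ac_simps)
    show ?thesis unfolding E0 of_real_sum sum_distrib_left by (simp only: pw)
  qed
  also have "cnj ?c * ?c = complex_of_real ((cmod ?c)\<^sup>2)" by (subst complex_norm_square) (rule mult.commute)
  finally have h1: "(\<Sum>m<M. cnj (EE M \<xi> 0 m) * EE M \<xi> 0 m) = complex_of_real ((cmod ?c)\<^sup>2 * (real M * ((real M)\<^sup>2 - 1) / 3))"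
    by (simp only: sum_d2 of_real_mult)
  have h2: "(cmod ?c)\<^sup>2 = (cmod (Complex (\<xi>$1) (\<xi>$2)))\<^sup>2 * (pi * cos (\<xi>$0) / 2)\<^sup>2"
    by (simp add: norm_mult power_mult_distrib power_divide)
  show "S 0 0 = (cmod (Complex (\<xi>$1) (\<xi>$2)))\<^sup>2 * (pi * cos (\<xi>$0) / 2)\<^sup>2 * (real M * ((real M)\<^sup>2 - 1) / 3)"
    unfolding S_def h1 Re_complex_of_real h2 ..
  have "(\<Sum>m<M. cnj (EE M \<xi> 0 m) * EE M \<xi> 1 m) = cnj ?c * (\<Sum>m<M. ?d m)"
    unfolding E0 E1 sum_distrib_left by (rule sum.cong[OF refl]) (simp only: complex_cnj_mult complex_cnj_complex_of_real complex_cnj_one complex_cnj_i mult_1_left mult_1_right ac_simps mult_minus_left mult_minus_right)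
  then show "S 0 1 = 0" unfolding S_def sum_d0c by simp
  have "(\<Sum>m<M. cnj (EE M \<xi> 0 m) * EE M \<xi> 2 m) = cnj ?c * \<i> * (\<Sum>m<M. ?d m)"
    unfolding E0 E2 sum_distrib_left by (rule sum.cong[OF refl]) (simp only: complex_cnj_mult complex_cnj_complex_of_real complex_cnj_one complex_cnj_i mult_1_left mult_1_right ac_simps mult_minus_left mult_minus_right)
  then show "S 0 2 = 0" unfolding S_def sum_d0c by simp
  have "(\<Sum>m<M. cnj (EE M \<xi> 1 m) * EE M \<xi> 0 m) = ?c * (\<Sum>m<M. ?d m)"
    unfolding E0 E1 sum_distrib_left by (rule sum.cong[OF refl]) (simp only: complex_cnj_mult complex_cnj_complex_of_real complex_cnj_one complex_cnj_i mult_1_left mult_1_right ac_simps mult_minus_left mult_minus_right)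
  then show "S 1 0 = 0" unfolding S_def sum_d0c by simp
  have "(\<Sum>m<M. cnj (EE M \<xi> 2 m) * EE M \<xi> 0 m) = - \<i> * ?c * (\<Sum>m<M. ?d m)"
    unfolding E0 E2 sum_distrib_left by (rule sum.cong[OF refl]) (simp only: complex_cnj_mult complex_cnj_complex_of_real complex_cnj_one complex_cnj_i mult_1_left mult_1_right ac_simps mult_minus_left mult_minus_right)
  then show "S 2 0 = 0" unfolding S_def sum_d0c by simp
  show "S 1 1 = real M" "S 2 2 = real M" "S 1 2 = 0" "S 2 1 = 0"
    unfolding S_def E1 E2 by simp_all
qed

lemma matrix_inv_eq:
  fixes A B :: "real^'n^'n"
  assumes "A ** B = mat 1" "B ** A = mat 1"
  shows "matrix_inv A = B"
proof -
  have ex: "\<exists>A'. A ** A' = mat 1 \<and> A' ** A = mat 1" using assms by blast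
  then have h: "A ** matrix_inv A = mat 1 \<and> matrix_inv A ** A = mat 1"
    unfolding matrix_inv_def by (rule someI_ex)
  have "matrix_inv A = matrix_inv A ** (A ** B)" using assms by (simp add: matrix_mul_rid)
  also have "\<dots> = (matrix_inv A ** A) ** B" by (simp add: matrix_mul_assoc)
  also have "\<dots> = B" using h by (simp add: matrix_mul_lid)
  finally show ?thesis .
qed

lemma diag_inv:
  fixes A :: "real^'n^'n"
  assumes "\<And>i j. A $ i $ j = (if i = j then f i else 0)" "\<And>i. f i \<noteq> 0"
  shows "matrix_inv A $ k $ k = 1 / f k"
proof -
  let ?B = "(\<chi> i j. if i = j then 1 / f i else 0) :: real^'n^'n"
  have "A ** ?B = mat 1" "?B ** A = mat 1"
    using assms by (auto simp: matrix_matrix_mult_def mat_def vec_eq_iff if_distrib if_distribR sum.delta cong: if_cong)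
  then have "matrix_inv A = ?B" by (rule matrix_inv_eq)
  then show ?thesis by simp
qed

lemma alg:
  fixes \<sigma> a n p t l c co m q :: real
  assumes "\<sigma> \<noteq> 0" "a \<noteq> 0" "n \<noteq> 0" "p \<noteq> 0" "t \<noteq> 0" "l \<noteq> 0" "c \<noteq> 0" "co \<noteq> 0" "m \<noteq> 0" "q \<noteq> 0"
  shows "1 / (2 / \<sigma>\<^sup>2 * (a\<^sup>2 * (n * (p * t)) * l) * (c\<^sup>2 * (pi * co / 2)\<^sup>2 * (m * q / 3)))
     = 6 * \<sigma>\<^sup>2 / (l * c\<^sup>2 * p * t * n * a\<^sup>2 * pi\<^sup>2 * co\<^sup>2 * m * q)"
  using assms by (simp add: field_simps power_mult_distrib power_divide)

lemma crb_formula: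
  fixes M N L :: nat and P \<tau> \<sigma> :: real and \<alpha> c3 :: complex and s :: "nat \<Rightarrow> complex"
  assumes "M \<ge> 2" and "N \<ge> 1" and "L \<ge> 1"
    and "P > 0" and "0 < \<tau>"
    and "\<alpha> \<noteq> 0" and "\<sigma> > 0" and "c3 \<noteq> 0"
    and s: "(\<Sum>l=1..L. s l * cnj (s l)) = of_nat L"
    and th: "\<theta> \<in> {-pi/2<..<pi/2}"
  shows "CRB M N L P \<tau> \<alpha> s \<sigma> c3 \<theta> =
              6 * \<sigma>\<^sup>2 / (real L * (cmod c3)\<^sup>2 * P * \<tau> * real N * (cmod \<alpha>)\<^sup>2 * pi\<^sup>2
                 * (cos \<theta>)\<^sup>2 * real M * ((real M)\<^sup>2 - 1))"
proof -
  define \<xi> :: "real^3" where "\<xi> = (\<chi> i. if i = 0 then \<theta> else if i = 1 then Re c3 else Im c3)"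
  have x0: "\<xi>$0 = \<theta>" and x1: "\<xi>$1 = Re c3" and x2: "\<xi>$2 = Im c3" unfolding \<xi>_def by simp_all
  have cc: "Complex (\<xi>$1) (\<xi>$2) = c3" unfolding x1 x2 by simp
  define K where "K = 2 / \<sigma>\<^sup>2 * ((cmod \<alpha>)\<^sup>2 * (real N * (P * \<tau>)) * real L)"
  define f :: "3 \<Rightarrow> real" where "f i = K * (if i = 0 then (cmod c3)\<^sup>2 * (pi * cos \<theta> / 2)\<^sup>2 * (real M * ((real M)\<^sup>2 - 1) / 3) else real M)" for i
  have M0: "0 < M" using assms by simp
  have PT: "P * \<tau> \<ge> 0" using assms by simp
  have F: "fisher M N L P \<tau> \<alpha> s \<sigma> \<xi> $ i $ j = K * Re (\<Sum>m<M. cnj (EE M \<xi> i m) * EE M \<xi> j m)" for i j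
    unfolding K_def by (rule fisher_form[OF M0 s PT])
  have t: "(3::3) = 0" by simp
  have ex: "i = 0 \<or> i = 1 \<or> i = 2" for i :: 3 using exhaust_3[of i] unfolding t by blast
  have Fd: "fisher M N L P \<tau> \<alpha> s \<sigma> \<xi> $ i $ j = (if i = j then f i else 0)" for i j
    using ex[of i] ex[of j] unfolding F f_def
    by (elim disjE; simp only: ee_sums cc x0; simp)
  have cpos: "cos \<theta> > 0" using th by (auto intro!: cos_gt_zero_pi)
  have Msq: "(real M)\<^sup>2 > 1"
  proof -
    have "real M \<ge> 2" using assms by simp
    then have "2 * 2 \<le> real M * real M" using mult_mono[of 2 "real M" 2 "real M"] by simp
    then show "(real M)\<^sup>2 > 1" by (simp add: power2_eq_square)
  qed
  have Mpos: "real M * ((real M)\<^sup>2 - 1) > 0" using Msq M0 by simp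
  have Kpos: "K > 0" unfolding K_def using assms by simp
  have A: "(cmod c3)\<^sup>2 > 0" using assms by simp
  have B: "(pi * cos \<theta> / 2)\<^sup>2 > 0" using cpos by simp
  have C: "real M * ((real M)\<^sup>2 - 1) / 3 > 0" using Mpos by simp
  have fnz: "f i \<noteq> 0" for i
  proof -
    have "f i > 0"
    proof (cases "i = 0")
      case True
      then have "f i = K * ((cmod c3)\<^sup>2 * (pi * cos \<theta> / 2)\<^sup>2 * (real M * ((real M)\<^sup>2 - 1) / 3))"
        unfolding f_def by simp
      then show ?thesis using Kpos A B C by (metis mult_pos_pos)
    next
      case False
      then show ?thesis unfolding f_def using Kpos M0 by simp
    qed
    then show ?thesis by simp
  qed
  have Mq: "(real M)\<^sup>2 - 1 \<noteq> 0" using Msq by linarith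
  have f0: "f 0 = K * ((cmod c3)\<^sup>2 * (pi * cos \<theta> / 2)\<^sup>2 * (real M * ((real M)\<^sup>2 - 1) / 3))"
    unfolding f_def by simp
  have "CRB M N L P \<tau> \<alpha> s \<sigma> c3 \<theta> = 1 / f 0"
    unfolding CRB_def \<xi>_def[symmetric] by (rule diag_inv[OF Fd fnz])
  also have "\<dots> = 6 * \<sigma>\<^sup>2 / (real L * (cmod c3)\<^sup>2 * P * \<tau> * real N * (cmod \<alpha>)\<^sup>2 * pi\<^sup>2
                 * (cos \<theta>)\<^sup>2 * real M * ((real M)\<^sup>2 - 1))"
    unfolding f0 K_def by (rule alg) (use assms cpos Mq in auto)
  finally show ?thesis .
qed

lemma sq_less_iff: "0 \<le> c \<Longrightarrow> 0 \<le> x \<Longrightarrow> (c < x) = (c\<^sup>2 < (x::real)\<^sup>2)"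
  by (auto intro: power_strict_mono power_less_imp_less_base)

lemma measure_part:
  fixes x :: real
  assumes x0: "0 < x"
  shows "measure (uniform_measure lborel {-pi/2<..<pi/2}) {\<theta> \<in> {-pi/2<..<pi/2}. cos \<theta> < x}
     = (if x < 1 then 2 / pi * arcsin x else 1)"
proof -
  let ?I = "{-pi/2<..<pi/2} :: real set"
  have mI: "emeasure lborel ?I = ennreal pi" by simp
  have mI': "measure lborel ?I = pi" by simp
  show ?thesis
  proof (cases "x \<le> 1")
    case False
    have "{\<theta> \<in> ?I. cos \<theta> < x} = ?I" using False by (auto intro: le_less_trans[OF cos_le_one])
    then show ?thesis using False mI mI' by simp
  next
    case True
    define a where "a = arccos x"
    have a0: "0 \<le> a" unfolding a_def using True x0 by (intro arccos_lbound) auto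
    have a1: "a \<le> pi/2" unfolding a_def using True x0 by (intro arccos_le_pi2) auto
    have ca: "cos a = x" unfolding a_def using True x0 by simp
    have a2: "a < pi/2" using a1 ca x0 by (metis cos_pi_half order_le_less order_less_irrefl)
    have S: "{\<theta> \<in> ?I. cos \<theta> < x} = {-pi/2<..<-a} \<union> {a<..<pi/2}"
    proof (intro set_eqI iffI)
      fix \<theta> assume "\<theta> \<in> {\<theta> \<in> ?I. cos \<theta> < x}"
      then have th: "\<theta> \<in> ?I" and c: "cos \<bar>\<theta>\<bar> < cos a" using ca by auto
      have "a < \<bar>\<theta>\<bar>" using c th a0 a1 by (subst (asm) cos_mono_less_eq) auto
      then show "\<theta> \<in> {-pi/2<..<-a} \<union> {a<..<pi/2}" using th by auto
    next
      fix \<theta> assume h: "\<theta> \<in> {-pi/2<..<-a} \<union> {a<..<pi/2}"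
      then have th: "\<theta> \<in> ?I" using a0 by auto
      have "a < \<bar>\<theta>\<bar>" using h a0 by auto
      then have "cos \<bar>\<theta>\<bar> < cos a" using th a0 a1 by (subst cos_mono_less_eq) auto
      then show "\<theta> \<in> {\<theta> \<in> ?I. cos \<theta> < x}" using th ca by simp
    qed
    have int: "?I \<inter> ({-pi/2<..<-a} \<union> {a<..<pi/2}) = {-pi/2<..<-a} \<union> {a<..<pi/2}" using a0 a2 by auto
    have "measure lborel ({-pi/2<..<-a} \<union> {a<..<pi/2}) = measure lborel {-pi/2<..<-a} + measure lborel {a<..<pi/2}"
      using a0 a2 by (intro measure_Union) auto
    also have "\<dots> = pi - 2 * a" using a2 by simp
    finally have m: "measure lborel ({-pi/2<..<-a} \<union> {a<..<pi/2}) = pi - 2 * a" .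
    have "measure (uniform_measure lborel ?I) {\<theta> \<in> ?I. cos \<theta> < x} = (pi - 2 * a) / pi"
    proof -
      have "measure (uniform_measure lborel ?I) ({-pi/2<..<-a} \<union> {a<..<pi/2})
          = measure lborel (?I \<inter> ({-pi/2<..<-a} \<union> {a<..<pi/2})) / measure lborel ?I"
        by (rule measure_uniform_measure) (use mI in auto)
      then show ?thesis unfolding S int m mI' .
    qed
    also have "\<dots> = 2 / pi * arcsin x"
      using arcsin_plus_arccos[of x] True x0 unfolding a_def by (simp add: field_simps)
    also have "\<dots> = (if x < 1 then 2 / pi * arcsin x else 1)"
      using True by auto
    finally show ?thesis .
  qed
qed

theorem lemma6:
  fixes M N L :: nat and P \<tau> \<sigma> :: real and \<alpha> c3 :: complex and s :: "nat \<Rightarrow> complex"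
  assumes "M \<ge> 2" and "N \<ge> 1" and "L \<ge> 1"
    and "P > 0" and "0 < \<tau>" and "\<tau> \<le> 1"
    and "\<alpha> \<noteq> 0" and "\<sigma> > 0" and "c3 \<noteq> 0"
    and "(\<Sum>l=1..L. s l * cnj (s l)) = of_nat L"
  shows "(\<forall>\<theta> \<in> {-pi/2<..<pi/2}.
            CRB M N L P \<tau> \<alpha> s \<sigma> c3 \<theta> =
              6 * \<sigma>\<^sup>2 / (real L * (cmod c3)\<^sup>2 * P * \<tau> * real N * (cmod \<alpha>)\<^sup>2 * pi\<^sup>2
                 * (cos \<theta>)\<^sup>2 * real M * ((real M)\<^sup>2 - 1)))
       \<and> (\<forall>\<epsilon>>0. let x = sqrt 6 * \<sigma> / sqrt (\<epsilon> * real L * (cmod c3)\<^sup>2 * P * \<tau> * real N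
                        * (cmod \<alpha>)\<^sup>2 * pi\<^sup>2 * real M * ((real M)\<^sup>2 - 1)) in
            measure (uniform_measure lborel {-pi/2<..<pi/2})
               {\<theta> \<in> {-pi/2<..<pi/2}. CRB M N L P \<tau> \<alpha> s \<sigma> c3 \<theta> > \<epsilon>}
            = (if x < 1 then 2 / pi * arcsin x else 1))"
proof (intro conjI ballI allI impI)
  fix \<theta> assume "\<theta> \<in> {-pi/2<..<pi/2}"
  then show "CRB M N L P \<tau> \<alpha> s \<sigma> c3 \<theta> =
              6 * \<sigma>\<^sup>2 / (real L * (cmod c3)\<^sup>2 * P * \<tau> * real N * (cmod \<alpha>)\<^sup>2 * pi\<^sup>2
                 * (cos \<theta>)\<^sup>2 * real M * ((real M)\<^sup>2 - 1))"
    using assms by (intro crb_formula) auto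
next
  fix \<epsilon> :: real assume ep: "\<epsilon> > 0"
  define Q where "Q = real L * (cmod c3)\<^sup>2 * P * \<tau> * real N * (cmod \<alpha>)\<^sup>2 * pi\<^sup>2 * real M * ((real M)\<^sup>2 - 1)"
  have Msq: "(real M)\<^sup>2 > 1"
  proof -
    have "real M \<ge> 2" using assms by simp
    then have "2 * 2 \<le> real M * real M" using mult_mono[of 2 "real M" 2 "real M"] by simp
    then show "(real M)\<^sup>2 > 1" by (simp add: power2_eq_square)
  qed
  have Qpos: "Q > 0" unfolding Q_def using assms Msq by simp
  have crb: "CRB M N L P \<tau> \<alpha> s \<sigma> c3 \<theta> = 6 * \<sigma>\<^sup>2 / (Q * (cos \<theta>)\<^sup>2)" if "\<theta> \<in> {-pi/2<..<pi/2}" for \<theta>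
  proof -
    have "CRB M N L P \<tau> \<alpha> s \<sigma> c3 \<theta> =
              6 * \<sigma>\<^sup>2 / (real L * (cmod c3)\<^sup>2 * P * \<tau> * real N * (cmod \<alpha>)\<^sup>2 * pi\<^sup>2
                 * (cos \<theta>)\<^sup>2 * real M * ((real M)\<^sup>2 - 1))"
      using assms that by (intro crb_formula) auto
    also have "\<dots> = 6 * \<sigma>\<^sup>2 / (Q * (cos \<theta>)\<^sup>2)" unfolding Q_def by (simp only: ac_simps)
    finally show ?thesis .
  qed
  have eQ: "\<epsilon> * real L * (cmod c3)\<^sup>2 * P * \<tau> * real N * (cmod \<alpha>)\<^sup>2 * pi\<^sup>2 * real M * ((real M)\<^sup>2 - 1) = \<epsilon> * Q"
    unfolding Q_def by (simp only: ac_simps)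
  define x where "x = sqrt 6 * \<sigma> / sqrt (\<epsilon> * Q)"
  have eQpos: "\<epsilon> * Q > 0" using ep Qpos by simp
  have xpos: "x > 0" unfolding x_def using assms eQpos by simp
  have x2: "x\<^sup>2 = 6 * \<sigma>\<^sup>2 / (\<epsilon> * Q)"
    unfolding x_def using eQpos by (simp add: power_divide power_mult_distrib)
  have iff: "(CRB M N L P \<tau> \<alpha> s \<sigma> c3 \<theta> > \<epsilon>) = (cos \<theta> < x)" if th: "\<theta> \<in> {-pi/2<..<pi/2}" for \<theta>
  proof -
    have cpos: "cos \<theta> > 0" using th by (auto intro!: cos_gt_zero_pi)
    have QC: "Q * (cos \<theta>)\<^sup>2 > 0" using Qpos cpos by simp
    have "(CRB M N L P \<tau> \<alpha> s \<sigma> c3 \<theta> > \<epsilon>) = (\<epsilon> * (Q * (cos \<theta>)\<^sup>2) < 6 * \<sigma>\<^sup>2)"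
      unfolding crb[OF th] using QC by (simp add: pos_less_divide_eq)
    also have "\<dots> = ((cos \<theta>)\<^sup>2 * (\<epsilon> * Q) < 6 * \<sigma>\<^sup>2)" by (simp only: ac_simps)
    also have "\<dots> = ((cos \<theta>)\<^sup>2 < x\<^sup>2)" unfolding x2 using eQpos by (simp add: pos_less_divide_eq)
    also have "\<dots> = (cos \<theta> < x)" by (rule sq_less_iff[symmetric]) (use cpos xpos in auto)
    finally show ?thesis .
  qed
  have S: "{\<theta> \<in> {-pi/2<..<pi/2}. CRB M N L P \<tau> \<alpha> s \<sigma> c3 \<theta> > \<epsilon>} = {\<theta> \<in> {-pi/2<..<pi/2}. cos \<theta> < x}"
    using iff by blast
  show "let x = sqrt 6 * \<sigma> / sqrt (\<epsilon> * real L * (cmod c3)\<^sup>2 * P * \<tau> * real N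
                        * (cmod \<alpha>)\<^sup>2 * pi\<^sup>2 * real M * ((real M)\<^sup>2 - 1)) in
            measure (uniform_measure lborel {-pi/2<..<pi/2})
               {\<theta> \<in> {-pi/2<..<pi/2}. CRB M N L P \<tau> \<alpha> s \<sigma> c3 \<theta> > \<epsilon>}
            = (if x < 1 then 2 / pi * arcsin x else 1)"
    unfolding Let_def eQ x_def[symmetric] S by (rule measure_part[OF xpos])
qed
end
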